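(* Let $\mathbf L\in\mathbb R_+^{n\times k}$ and $\mathbf p\in\operatorname{relint}(\Delta_n)$. Then for any $t_1,t_2\in\operatorname{argmin}_{t'\in[k]}\mathbf p^\top\boldsymbol\ell_{t'}$ (i.e. $\mathbf p\in\mathcal Q^{\mathbf L}_{t_1}\cap\mathcal Q^{\mathbf L}_{t_2}$), we have $\mu_{\mathcal Q^{\mathbf L}_{t_1}}(\mathbf p)=\mu_{\mathcal Q^{\mathbf L}_{t_2}}(\mathbf p)$.
   Context: Notation: $[m]=\{1,\dots,m\}$; $\Delta_n=\{\mathbf p\in\mathbb R_+^n:\sum_i p_i=1\}$, whose relative interior is the set of $\mathbf p\in\Delta_n$ with all entries strictly positive. A loss matrix $\mathbf L\in\mathbb R_+^{n\times k}$ has columns $\boldsymbol\ell_t$. Trigger probability set: $\mathcal Q^{\mathbf L}_t=\{\mathbf p\in\Delta_n: t\in\operatorname{argmin}_{t'\in[k]}\mathbf p^\top\boldsymbol\ell_{t'}\}$. For a convex set $\mathcal Q\subseteq\mathbb R^n$ and $\mathbf p\in\mathcal Q$, $\mathcal F_{\mathcal Q}(\mathbf p)=\{\mathbf v:\exists\epsilon_0>0,\ \mathbf p+\epsilon\mathbf v\in\mathcal Q\ \forall\epsilon\in(0,\epsilon_0)\}$ and $\mu_{\mathcal Q}(\mathbf p)=\dim(\mathcal F_{\mathcal Q}(\mathbf p)\cap(-\mathcal F_{\mathcal Q}(\mathbf p)))$. *)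

theory Defs
  imports "HOL-Analysis.Analysis"
begin

text \<open>Vectors in R^n are real^'n; a loss matrix L in R_+^{n x k} is real^'k^'n
  (row index 'n, column index 'k); its t-th column is column t L.\<close>

definition prob_simplex :: "(real^'n) set" where
  "prob_simplex = {p. (\<forall>i. 0 \<le> p $ i) \<and> (\<Sum>i\<in>UNIV. p $ i) = 1}"

definition relint_simplex :: "(real^'n) set" where
  "relint_simplex = {p. (\<forall>i. 0 < p $ i) \<and> (\<Sum>i\<in>UNIV. p $ i) = 1}"

definition nonneg_matrix :: "real^'k^'n \<Rightarrow> bool" where
  "nonneg_matrix L \<longleftrightarrow> (\<forall>i j. 0 \<le> L $ i $ j)"

definition is_argmin_loss :: "real^'k^'n \<Rightarrow> real^'n \<Rightarrow> 'k \<Rightarrow> bool" where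
  "is_argmin_loss L p t \<longleftrightarrow> (\<forall>t'. p \<bullet> column t L \<le> p \<bullet> column t' L)"

definition trigger_set :: "real^'k^'n \<Rightarrow> 'k \<Rightarrow> (real^'n) set" where
  "trigger_set L t = {p \<in> prob_simplex. is_argmin_loss L p t}"

definition feasible_dirs :: "(real^'n) set \<Rightarrow> real^'n \<Rightarrow> (real^'n) set" where
  "feasible_dirs Q p = {v. \<exists>e0>0. \<forall>e. 0 < e \<and> e < e0 \<longrightarrow> p + e *\<^sub>R v \<in> Q}"

definition mu_dim :: "(real^'n) set \<Rightarrow> real^'n \<Rightarrow> nat" where
  "mu_dim Q p = dim (feasible_dirs Q p \<inter> uminus ` feasible_dirs Q p)"

end

theory Submission
  imports Defs
begin

definition lin_cond :: "real^'k^'n \<Rightarrow> real^'n \<Rightarrow> 'k \<Rightarrow> real^'n \<Rightarrow> bool" where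
  "lin_cond L p t v \<longleftrightarrow> (\<Sum>i\<in>UNIV. v $ i) = 0 \<and>
     (\<forall>t'. p \<bullet> column t' L = p \<bullet> column t L \<longrightarrow> v \<bullet> column t' L = v \<bullet> column t L)"

lemma sum_comb: "(\<Sum>i\<in>UNIV. (p + e *\<^sub>R v) $ i) = (\<Sum>i\<in>UNIV. p $ i) + e * (\<Sum>i\<in>UNIV. (v::real^'n) $ i)"
  by (simp add: sum.distrib sum_distrib_left)

lemma inner_comb: "(p + e *\<^sub>R v) \<bullet> c = p \<bullet> c + e * (v \<bullet> (c::real^'n))"
  by (simp add: inner_add_left)

lemma feas_imp:
  assumes p: "p \<in> relint_simplex" and t: "is_argmin_loss L p t"
    and v: "v \<in> feasible_dirs (trigger_set L t) p"
  shows "(\<Sum>i\<in>UNIV. v $ i) = 0 \<and>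
     (\<forall>t'. p \<bullet> column t' L = p \<bullet> column t L \<longrightarrow> v \<bullet> column t L \<le> v \<bullet> column t' L)"
proof -
  from v obtain e0 where e0: "e0 > 0" and h: "\<And>e. 0 < e \<Longrightarrow> e < e0 \<Longrightarrow> p + e *\<^sub>R v \<in> trigger_set L t"
    unfolding feasible_dirs_def by blast
  define e where "e = e0/2"
  have e: "0 < e" "e < e0" using e0 by (auto simp: e_def)
  have m: "p + e *\<^sub>R v \<in> trigger_set L t" using h e by blast
  have ps: "(\<Sum>i\<in>UNIV. p $ i) = 1" using p by (simp add: relint_simplex_def)
  from m have "(\<Sum>i\<in>UNIV. (p + e *\<^sub>R v) $ i) = 1"
    by (simp add: trigger_set_def prob_simplex_def)
  hence "e * (\<Sum>i\<in>UNIV. v $ i) = 0" using ps sum_comb[of p e v] by linarith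
  hence s: "(\<Sum>i\<in>UNIV. v $ i) = 0" using e by simp
  have "\<forall>t'. p \<bullet> column t' L = p \<bullet> column t L \<longrightarrow> v \<bullet> column t L \<le> v \<bullet> column t' L"
  proof (intro allI impI)
    fix t' assume eq: "p \<bullet> column t' L = p \<bullet> column t L"
    from m have "(p + e *\<^sub>R v) \<bullet> column t L \<le> (p + e *\<^sub>R v) \<bullet> column t' L"
      by (simp add: trigger_set_def is_argmin_loss_def)
    hence "e * (v \<bullet> column t L) \<le> e * (v \<bullet> column t' L)" using eq inner_comb[of p e v "column t L"] inner_comb[of p e v "column t' L"] by linarith
    thus "v \<bullet> column t L \<le> v \<bullet> column t' L" using e by simp
  qed
  with s show ?thesis by blast
qed

lemma cond_imp_feas:
  assumes p: "p \<in> relint_simplex" and t: "is_argmin_loss L p t"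
    and c: "lin_cond L p t v"
  shows "v \<in> feasible_dirs (trigger_set L t) p"
proof -
  have pos: "\<And>i. 0 < p $ i" and ps: "(\<Sum>i\<in>UNIV. p $ i) = 1" using p by (auto simp: relint_simplex_def)
  have tl: "((\<lambda>e. e::real) \<longlongrightarrow> 0) (at_right 0)" by (rule tendsto_ident_at)
  have E1: "\<forall>\<^sub>F e in at_right 0. \<forall>i. 0 < (p + e *\<^sub>R v) $ i"
  proof (rule eventually_all_finite)
    fix i
    have "((\<lambda>e. p $ i + e * v $ i) \<longlongrightarrow> p $ i + 0 * v $ i) (at_right 0)"
      by (intro tendsto_add tendsto_const tendsto_mult tl)
    from order_tendstoD(1)[OF this] show "\<forall>\<^sub>F e in at_right 0. 0 < (p + e *\<^sub>R v) $ i"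
      using pos[of i] by simp
  qed
  have E2: "\<forall>\<^sub>F e in at_right 0. \<forall>t'. (p + e *\<^sub>R v) \<bullet> column t L \<le> (p + e *\<^sub>R v) \<bullet> column t' L"
  proof (rule eventually_all_finite)
    fix t'
    show "\<forall>\<^sub>F e in at_right 0. (p + e *\<^sub>R v) \<bullet> column t L \<le> (p + e *\<^sub>R v) \<bullet> column t' L"
    proof (cases "p \<bullet> column t' L = p \<bullet> column t L")
      case True
      have vv: "v \<bullet> column t' L = v \<bullet> column t L" using c True unfolding lin_cond_def by blast
      have "(p + e *\<^sub>R v) \<bullet> column t L \<le> (p + e *\<^sub>R v) \<bullet> column t' L" for e :: real
      proof -
        have "(p + e *\<^sub>R v) \<bullet> column t' L = p \<bullet> column t' L + e * (v \<bullet> column t' L)" by (rule inner_comb)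
        also have "\<dots> = p \<bullet> column t L + e * (v \<bullet> column t L)" by (simp only: True vv)
        also have "\<dots> = (p + e *\<^sub>R v) \<bullet> column t L" by (rule inner_comb[symmetric])
        finally show ?thesis by simp
      qed
      thus ?thesis by (simp add: always_eventually)
    next
      case False
      have "p \<bullet> column t L \<le> p \<bullet> column t' L" using t by (simp add: is_argmin_loss_def)
      hence g: "0 < p \<bullet> column t' L - p \<bullet> column t L" using False by linarith
      have "((\<lambda>e. (p \<bullet> column t' L - p \<bullet> column t L) + e * (v \<bullet> column t' L - v \<bullet> column t L))
          \<longlongrightarrow> (p \<bullet> column t' L - p \<bullet> column t L) + 0 * (v \<bullet> column t' L - v \<bullet> column t L)) (at_right 0)"
        by (intro tendsto_add tendsto_const tendsto_mult tl)
      from order_tendstoD(1)[OF this, of 0] g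
      have "\<forall>\<^sub>F e in at_right 0. 0 < (p \<bullet> column t' L - p \<bullet> column t L) + e * (v \<bullet> column t' L - v \<bullet> column t L)"
        by simp
      thus ?thesis
      proof (rule eventually_mono)
        fix e :: real
        assume h: "0 < (p \<bullet> column t' L - p \<bullet> column t L) + e * (v \<bullet> column t' L - v \<bullet> column t L)"
        have "e * (v \<bullet> column t' L - v \<bullet> column t L) = e * (v \<bullet> column t' L) - e * (v \<bullet> column t L)"
          by (rule right_diff_distrib)
        with h show "(p + e *\<^sub>R v) \<bullet> column t L \<le> (p + e *\<^sub>R v) \<bullet> column t' L"
          using inner_comb[of p e v "column t L"] inner_comb[of p e v "column t' L"] by linarith
      qed
    qed
  qed
  have "\<forall>\<^sub>F e in at_right 0. p + e *\<^sub>R v \<in> trigger_set L t"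
    using eventually_conj[OF E1 E2]
  proof (rule eventually_mono)
    fix e :: real assume a: "(\<forall>i. 0 < (p + e *\<^sub>R v) $ i) \<and>
       (\<forall>t'. (p + e *\<^sub>R v) \<bullet> column t L \<le> (p + e *\<^sub>R v) \<bullet> column t' L)"
    have "(\<Sum>i\<in>UNIV. (p + e *\<^sub>R v) $ i) = 1" using ps sum_comb[of p e v] c[unfolded lin_cond_def] by (metis add.right_neutral mult_zero_right)
    moreover have "\<forall>i. 0 \<le> (p + e *\<^sub>R v) $ i" using a less_imp_le by blast
    moreover have "is_argmin_loss L (p + e *\<^sub>R v) t" unfolding is_argmin_loss_def using a by blast
    ultimately show "p + e *\<^sub>R v \<in> trigger_set L t"
      unfolding trigger_set_def prob_simplex_def by blast
  qed
  then obtain b where "b > 0" "\<forall>y>0. y < b \<longrightarrow> p + y *\<^sub>R v \<in> trigger_set L t"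
    unfolding eventually_at_right_field by blast
  thus ?thesis unfolding feasible_dirs_def by blast
qed

lemma char:
  assumes p: "p \<in> relint_simplex" and t: "is_argmin_loss L p t"
  shows "feasible_dirs (trigger_set L t) p \<inter> uminus ` feasible_dirs (trigger_set L t) p
     = {v. lin_cond L p t v}"
proof (intro set_eqI iffI)
  fix v assume "v \<in> feasible_dirs (trigger_set L t) p \<inter> uminus ` feasible_dirs (trigger_set L t) p"
  hence a: "v \<in> feasible_dirs (trigger_set L t) p" and b: "- v \<in> feasible_dirs (trigger_set L t) p"
    by (auto simp: image_iff)
  note A = feas_imp[OF p t a] and B = feas_imp[OF p t b]
  have "\<forall>t'. p \<bullet> column t' L = p \<bullet> column t L \<longrightarrow> v \<bullet> column t' L = v \<bullet> column t L"
  proof (intro allI impI)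
    fix t' assume eq: "p \<bullet> column t' L = p \<bullet> column t L"
    have "v \<bullet> column t L \<le> v \<bullet> column t' L" using A eq by blast
    moreover have "(- v) \<bullet> column t L \<le> (- v) \<bullet> column t' L" using B eq by blast
    hence "- (v \<bullet> column t L) \<le> - (v \<bullet> column t' L)" by (simp only: inner_minus_left)
    ultimately show "v \<bullet> column t' L = v \<bullet> column t L" by linarith
  qed
  with A show "v \<in> {v. lin_cond L p t v}" unfolding lin_cond_def by blast
next
  fix v assume "v \<in> {v. lin_cond L p t v}"
  hence c: "lin_cond L p t v" by simp
  have c': "lin_cond L p t (- v)" using c unfolding lin_cond_def
    by (metis (no_types, lifting) inner_minus_left sum_negf minus_zero vector_uminus_component sum.cong)
  have "v \<in> feasible_dirs (trigger_set L t) p" by (rule cond_imp_feas[OF p t c])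
  moreover have "- v \<in> feasible_dirs (trigger_set L t) p" by (rule cond_imp_feas[OF p t c'])
  hence "v \<in> uminus ` feasible_dirs (trigger_set L t) p"
    by (metis image_eqI minus_minus)
  ultimately show "v \<in> feasible_dirs (trigger_set L t) p \<inter> uminus ` feasible_dirs (trigger_set L t) p"
    by blast
qed

theorem mainTheorem12:
  fixes L :: "real^'k^'n" and p :: "real^'n" and t1 t2 :: 'k
  assumes "nonneg_matrix L"
    and "p \<in> relint_simplex"
    and "is_argmin_loss L p t1"
    and "is_argmin_loss L p t2"
  shows "mu_dim (trigger_set L t1) p = mu_dim (trigger_set L t2) p"
proof -
  have eq: "p \<bullet> column t1 L = p \<bullet> column t2 L"
    using assms(3,4) unfolding is_argmin_loss_def by (meson order_antisym)
  have "{v. lin_cond L p t1 v} = {v. lin_cond L p t2 v}"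
  proof (intro set_eqI iffI; simp)
    fix v assume c: "lin_cond L p t1 v"
    hence "v \<bullet> column t2 L = v \<bullet> column t1 L" using eq unfolding lin_cond_def by metis
    with c eq show "lin_cond L p t2 v" unfolding lin_cond_def by metis
  next
    fix v assume c: "lin_cond L p t2 v"
    hence "v \<bullet> column t1 L = v \<bullet> column t2 L" using eq unfolding lin_cond_def by metis
    with c eq show "lin_cond L p t1 v" unfolding lin_cond_def by metis
  qed
  thus ?thesis unfolding mu_dim_def using char[OF assms(2,3)] char[OF assms(2,4)] by simp
qed

end
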